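(* Under the standing assumptions, $\sum_{n\eta_2\le S\le n\eta_3}\Phi(S)=o(1)$ as $n\to\infty$, the sum being over integers $S$.
   Context: Parameters: integer $k\ge2$, constants $\alpha>0$, $r>0$, $0<p<1$; $d=n^{\alpha}$ (treated as an integer), $m=n\ln d$, $\tau=\frac1{1-p}$, $r_{cr}=\frac1{\ln\tau}$. Standing assumptions: $(2k-1)\alpha>1$, $k\alpha\le1$, $k\ge\frac{\tau\ln\tau}{\tau-1}$, and $r<r_{cr}$. Notation: $f(s)=1+\frac{p}{1-p}\cdot\frac{s^k-d^{-k}}{1-d^{-k}}$ for $s\in[0,1]$; $B(S)=\binom{n}{S}\left(\frac1d\right)^{S}\left(1-\frac1d\right)^{n-S}$; $W(S)=f(S/n)^{rm}$; $\Phi(S)=B(S)W(S)$. Let $\alpha_0=\frac{(2k-1)\alpha-1}{2(k-1)}$, and let $\eta_2,\eta_3,\mu$ be constants with $0<\eta_2<\eta_3<1$, $\alpha_0/\alpha-\mu\eta_2^{k-1}>0$, $\mu>\frac{kpr}{1-p}$, and $r\ln(1-p)+\eta_3>0$. *)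

theory Defs
  imports Complex_Main
begin

definition dd :: "real \<Rightarrow> nat \<Rightarrow> real" where
  "dd \<alpha> n = real n powr \<alpha>"

definition mm :: "real \<Rightarrow> nat \<Rightarrow> real" where
  "mm \<alpha> n = real n * ln (dd \<alpha> n)"

definition ff :: "nat \<Rightarrow> real \<Rightarrow> real \<Rightarrow> nat \<Rightarrow> real \<Rightarrow> real" where
  "ff k \<alpha> p n s = 1 + p / (1 - p) * ((s ^ k - (dd \<alpha> n) powi (- int k)) / (1 - (dd \<alpha> n) powi (- int k)))"

definition BB :: "real \<Rightarrow> nat \<Rightarrow> nat \<Rightarrow> real" where
  "BB \<alpha> n S = real (n choose S) * (1 / dd \<alpha> n) ^ S * (1 - 1 / dd \<alpha> n) ^ (n - S)"

definition WW :: "nat \<Rightarrow> real \<Rightarrow> real \<Rightarrow> real \<Rightarrow> nat \<Rightarrow> nat \<Rightarrow> real" where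
  "WW k \<alpha> r p n S = ff k \<alpha> p n (real S / real n) powr (r * mm \<alpha> n)"

definition Phi :: "nat \<Rightarrow> real \<Rightarrow> real \<Rightarrow> real \<Rightarrow> nat \<Rightarrow> nat \<Rightarrow> real" where
  "Phi k \<alpha> r p n S = BB \<alpha> n S * WW k \<alpha> r p n S"

end

theory Submission
  imports Defs "HOL-Real_Asymp.Real_Asymp"
begin

lemma zmono:
  fixes y q :: real assumes "0 < y" "y \<le> q"
  shows "(1+y)*ln(1+y)/y \<le> (1+q)*ln(1+q)/q"
proof (rule DERIV_nonneg_imp_nondecreasing[OF assms(2)])
  fix x assume x: "y \<le> x" "x \<le> q"
  hence xp: "x > 0" using assms by auto
  have "((\<lambda>x. (1+x)*ln(1+x)/x) has_real_derivative ((ln(1+x) + 1)*x - (1+x)*ln(1+x))/x^2) (at x)"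
    using xp apply (auto intro!: derivative_eq_intros)
    apply (subgoal_tac "1+x > 0")
     apply (simp add: field_simps power2_eq_square)
     apply (simp add: algebra_simps)
    done
  moreover have "((ln(1+x) + 1)*x - (1+x)*ln(1+x))/x^2 \<ge> 0"
    using ln_add_one_self_le_self[of x] xp by (auto simp: algebra_simps)
  ultimately show "\<exists>d. ((\<lambda>x. (1+x)*ln(1+x)/x) has_real_derivative d) (at x) \<and> d \<ge> 0" by blast
qed

lemma key_ineq:
  fixes q s :: real and k :: nat
  assumes q: "q > 0" and k: "real k \<ge> (1+q)*ln(1+q)/q" "k \<ge> 1" and s: "0 < s" "s \<le> 1"
  shows "ln (1 + q*s^k) \<le> s * ln (1+q)"
proof -
  let ?L = "\<lambda>x. ln (1 + q*x^k)"
  let ?chi = "\<lambda>x. ln (?L x) - ln x"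
  have "?chi s \<le> ?chi 1"
  proof (rule DERIV_nonneg_imp_nondecreasing[OF s(2)])
    fix x assume x: "s \<le> x" "x \<le> 1"
    hence xp: "x > 0" using s by auto
    define y where "y = q*x^k"
    have yp: "y > 0" using xp q by (simp add: y_def)
    have yq: "y \<le> q" unfolding y_def using q x xp by (simp add: power_le_one mult_left_le)
    have Lp: "?L x > 0" using yp by (simp add: y_def)
    have "(1+y)*ln(1+y)/y \<le> real k" using zmono[OF yp yq] k by linarith
    hence ky: "(1+y)*ln(1+y) \<le> real k * y" using yp by (simp add: divide_le_eq)
    have xk: "x * x^(k-1) = x^k" using k(2) by (metis One_nat_def Suc_pred le_simps(3) power_Suc zero_less_one)
    have "(?chi has_real_derivative (real k * q * x^(k-1) / (1 + q*x^k) / ?L x - 1/x)) (at x)"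
      using xp Lp yp unfolding y_def
      apply (auto intro!: derivative_eq_intros simp: add_pos_pos)
      by (simp add: mult_ac)
    moreover have "real k * q * x^(k-1) / (1 + q*x^k) / ?L x - 1/x
        = (real k * y - (1+y)*ln(1+y)) / (x*(1+y)*ln(1+y))"
    proof -
      define A where "A = 1 + q*x^k"
      define L where "L = ?L x"
      have Ap: "A > 0" "L > 0" using yp Lp by (auto simp: A_def L_def y_def)
      have "real k * q * x^(k-1) = real k * y / x" using xk xp unfolding y_def by (simp add: field_simps)
      hence "real k * q * x^(k-1) / (1 + q*x^k) / ?L x - 1/x = (real k * y / x) / A / L - 1/x"
        by (simp add: A_def L_def)
      also have "\<dots> = (real k * y - A*L) / (x*A*L)" using Ap xp by (simp add: field_simps)
      finally show ?thesis by (simp add: A_def L_def y_def)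
    qed
    moreover have "(real k * y - (1+y)*ln(1+y)) / (x*(1+y)*ln(1+y)) \<ge> 0"
      using ky xp yp Lp unfolding y_def[symmetric] by (auto intro!: divide_nonneg_pos simp: y_def)
    ultimately show "\<exists>d. (?chi has_real_derivative d) (at x) \<and> d \<ge> 0" by metis
  qed
  hence "ln (?L s) \<le> ln (ln (1+q)) + ln s" by simp
  also have "\<dots> = ln (s * ln (1+q))" using s q by (simp add: ln_mult)
  finally have "ln (?L s) \<le> ln (s * ln (1+q))" .
  moreover have "?L s > 0" using q s by (simp add: add_pos_pos)
  moreover have "s * ln (1+q) > 0" using q s by simp
  ultimately show ?thesis by simp
qed
lemma lim1: fixes K :: real assumes "K > 0"
  shows "(\<lambda>n::nat. (real n+1)*2^n*exp(-K*real n*ln (real n))) \<longlonglongrightarrow> 0"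
  using assms by real_asymp
lemma ev1: fixes \<alpha> A :: real assumes "\<alpha> > 0"
  shows "eventually (\<lambda>n::nat. real n powr \<alpha> \<ge> A) sequentially"
  using assms by real_asymp
lemma "x > 0 \<Longrightarrow> (x::real) powi (- int k) = 1 / x^k"
  by (simp add: power_int_minus divide_inverse)

theorem lemma4p9:
  fixes k :: nat and \<alpha> r p \<eta>\<^sub>2 \<eta>\<^sub>3 \<mu> :: real
  defines "\<tau> \<equiv> 1 / (1 - p)"
  defines "\<alpha>\<^sub>0 \<equiv> ((2 * real k - 1) * \<alpha> - 1) / (2 * (real k - 1))"
  assumes "k \<ge> 2" and "\<alpha> > 0" and "r > 0" and "0 < p" and "p < 1"
    and "(2 * real k - 1) * \<alpha> > 1" and "real k * \<alpha> \<le> 1"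
    and "real k \<ge> \<tau> * ln \<tau> / (\<tau> - 1)"
    and "r < 1 / ln \<tau>"
    and "0 < \<eta>\<^sub>2" and "\<eta>\<^sub>2 < \<eta>\<^sub>3" and "\<eta>\<^sub>3 < 1"
    and "\<alpha>\<^sub>0 / \<alpha> - \<mu> * \<eta>\<^sub>2 ^ (k - 1) > 0"
    and "\<mu> > real k * p * r / (1 - p)"
    and "r * ln (1 - p) + \<eta>\<^sub>3 > 0"
  shows "(\<lambda>n. \<Sum>S\<in>{S::nat. real n * \<eta>\<^sub>2 \<le> real S \<and> real S \<le> real n * \<eta>\<^sub>3}.
            Phi k \<alpha> r p n S) \<longlonglongrightarrow> 0"
proof -
  note A = assms(3-)
  define q where "q = p / (1 - p)"
  have qp: "q > 0" using A by (simp add: q_def)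
  have tq: "\<tau> = 1 + q" using A by (simp add: \<tau>_def q_def field_simps)
  have kq: "real k \<ge> (1+q)*ln(1+q)/q" using A(8) tq by simp
  have lnt: "ln \<tau> > 0" using tq qp by simp
  define \<theta> where "\<theta> = r * ln \<tau>"
  have th1: "\<theta> < 1" using A(9) lnt by (simp add: \<theta>_def field_simps)
  have th0: "\<theta> > 0" using A lnt by (simp add: \<theta>_def)
  define c where "c = \<eta>\<^sub>2 * (1 - \<theta>)"
  have cp: "c > 0" using th1 A by (simp add: c_def)
  define K where "K = c * \<alpha>"
  have Kp: "K > 0" using cp A by (simp add: K_def)
  let ?I = "\<lambda>n. {S::nat. real n * \<eta>\<^sub>2 \<le> real S \<and> real S \<le> real n * \<eta>\<^sub>3}"
  let ?F = "\<lambda>n. \<Sum>S\<in>?I n. Phi k \<alpha> r p n S"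
  have evd: "eventually (\<lambda>n::nat. real n powr \<alpha> \<ge> max 2 (1/\<eta>\<^sub>2)) sequentially"
    using ev1[OF A(2)] .
  have main: "0 \<le> ?F n \<and> ?F n \<le> (real n+1)*2^n*exp(-K*real n*ln (real n))"
    if nd: "real n powr \<alpha> \<ge> max 2 (1/\<eta>\<^sub>2)" for n
  proof -
    define d where "d = real n powr \<alpha>"
    have dd: "dd \<alpha> n = d" by (simp add: dd_def d_def)
    have d2: "d \<ge> 2" and dinv0: "1/\<eta>\<^sub>2 \<le> d" using nd by (auto simp: d_def)
    have dinv: "1/d \<le> \<eta>\<^sub>2" using dinv0 d2 A(10) by (simp add: field_simps)
    have n0: "n > 0" using d2 by (cases n) (auto simp: d_def)
    have lnd: "ln d = \<alpha> * ln (real n)" using n0 by (simp add: d_def ln_powr)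
    have lndp: "ln d > 0" using d2 by simp
    have sub: "?I n \<subseteq> {..n}" using A(12) n0
      by auto (smt (verit, ccfv_SIG) of_nat_le_iff mult_left_le of_nat_0_le_iff)
    have fin: "finite (?I n)" using sub finite_subset by blast
    have card: "real (card (?I n)) \<le> real n + 1"
      using card_mono[OF _ sub] by simp
    have bnd: "0 \<le> Phi k \<alpha> r p n S \<and> Phi k \<alpha> r p n S \<le> 2^n*exp(-K*real n*ln (real n))"
      if S: "S \<in> ?I n" for S
    proof -
      define s where "s = real S / real n"
      have s1: "\<eta>\<^sub>2 \<le> s" "s \<le> \<eta>\<^sub>3" using S n0 by (auto simp: s_def field_simps)
      have s0: "s > 0" "s \<le> 1" using s1 A by auto
      have Ss: "real S = real n * s" using n0 by (simp add: s_def)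
      define e where "e = d powi (- int k)"
      have e: "e = 1/d^k" using d2 by (simp add: e_def power_int_minus divide_inverse)
      have e01: "0 < e" "e < 1" using d2 A(1) unfolding e
        by (auto simp: divide_simps)
      have ske: "e \<le> s^k" unfolding e using dinv d2
        by (metis power_mono power_one_over order_trans s1(1) divide_nonneg_nonneg zero_le_one
             order_less_imp_le zero_less_numeral less_le_trans d2)
      have ff: "ff k \<alpha> p n s = 1 + q * ((s^k - e)/(1-e))"
        by (simp add: ff_def dd e_def q_def)
      have f1: "ff k \<alpha> p n s \<ge> 1" using ff ske e01 qp by simp
      have sk1: "s^k \<le> 1" using s0 by (simp add: power_le_one)
      have "(s^k - e)/(1-e) \<le> s^k" using e01 sk1
        by (simp add: divide_le_eq algebra_simps)
      hence "q * ((s^k - e)/(1-e)) \<le> q * s^k" using qp by (intro mult_left_mono) auto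
      hence f2: "ff k \<alpha> p n s \<le> 1 + q*s^k" using ff by linarith
      have lnf: "ln (ff k \<alpha> p n s) \<le> s * ln \<tau>"
      proof -
        have "ln (ff k \<alpha> p n s) \<le> ln (1 + q*s^k)" using f1 f2 by simp
        also have "\<dots> \<le> s * ln (1+q)" using key_ineq[OF qp kq _ s0] A(1) by simp
        finally show ?thesis using tq by simp
      qed
      have W: "WW k \<alpha> r p n S = exp (r * (real n * ln d) * ln (ff k \<alpha> p n s))"
        using f1 by (simp add: WW_def mm_def dd s_def powr_def)
      have W2: "WW k \<alpha> r p n S \<le> exp (\<theta> * real S * ln d)"
      proof -
        have "r * (real n * ln d) * ln (ff k \<alpha> p n s) \<le> r * (real n * ln d) * (s * ln \<tau>)"
          using lnf A(3) lndp n0 by (intro mult_left_mono) auto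
        also have "\<dots> = \<theta> * real S * ln d" by (simp add: \<theta>_def Ss)
        finally show ?thesis using W by simp
      qed
      have Wn: "WW k \<alpha> r p n S \<ge> 0" using W by simp
      have B0: "BB \<alpha> n S \<ge> 0" using d2 by (simp add: BB_def dd)
      have B: "BB \<alpha> n S \<le> 2^n * exp (- real S * ln d)"
      proof -
        have "BB \<alpha> n S \<le> real (n choose S) * (1/d)^S * 1"
          unfolding BB_def dd using d2
          by (intro mult_left_mono power_le_one) auto
        also have "\<dots> \<le> 2^n * (1/d)^S"
        proof -
          have "real (n choose S) \<le> 2^n"
            by (metis binomial_le_pow2 of_nat_le_iff of_nat_numeral of_nat_power)
          thus ?thesis using d2 by (simp add: mult_right_mono)
        qed
        also have "(1/d)^S = exp (- real S * ln d)"
        proof -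
          have "exp (real S * ln d) = d^S" using d2 by (simp add: exp_of_nat_mult)
          thus ?thesis by (simp add: exp_minus power_one_over inverse_eq_divide)
        qed
        finally show ?thesis .
      qed
      have "Phi k \<alpha> r p n S \<le> 2^n * exp (- real S * ln d) * exp (\<theta> * real S * ln d)"
        unfolding Phi_def using B W2 Wn by (intro mult_mono) auto
      also have "\<dots> = 2^n * exp (-(1-\<theta>) * real S * ln d)"
        by (simp add: exp_add[symmetric] algebra_simps)
      also have "\<dots> \<le> 2^n * exp (-K * real n * ln (real n))"
      proof -
        have "(1-\<theta>) * (real n * \<eta>\<^sub>2) * ln d \<le> (1-\<theta>) * real S * ln d"
          using S th1 lndp by (intro mult_right_mono mult_left_mono) auto
        thus ?thesis by (simp add: K_def c_def lnd algebra_simps)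
      qed
      finally show ?thesis using B0 Wn unfolding Phi_def by simp
    qed
    have "?F n \<le> (\<Sum>S\<in>?I n. 2^n*exp(-K*real n*ln (real n)))"
      using bnd by (intro sum_mono) auto
    also have "\<dots> = real (card (?I n)) * (2^n*exp(-K*real n*ln (real n)))" by simp
    also have "\<dots> \<le> (real n + 1) * (2^n*exp(-K*real n*ln (real n)))"
      using card by (intro mult_right_mono) auto
    finally show ?thesis using bnd by (auto intro: sum_nonneg simp: mult_ac)
  qed
  show ?thesis
  proof (rule tendsto_sandwich[OF _ _ tendsto_const lim1[OF Kp]])
    show "eventually (\<lambda>n. 0 \<le> ?F n) sequentially" using evd by eventually_elim (use main in blast)
    show "eventually (\<lambda>n. ?F n \<le> (real n+1)*2^n*exp(-K*real n*ln (real n))) sequentially"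
      using evd by eventually_elim (use main in blast)
  qed
qed

end
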